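(* Let $n\geq 1$ and let $x_1,\dots,x_n\in(0,\tfrac12]$ be not all equal. With $A_n,G_n,A'_n,G'_n$ and $I$ as in the context, $$\frac{A'_n}{G'_n}<\left(\frac{A_n}{G_n}\right)^{\frac{A_n+G_n}{A'_n+G'_n}\cdot\frac{A'_n-G'_n}{A_n-G_n}}<\min\left\{\left(\frac{A_n}{G_n}\right)^{\frac{A_n+G_n}{A'_n+G'_n}},\left(\frac{A_n}{G_n}\right)^{\frac{A'_n-G'_n}{A_n-G_n}}\right\}<\frac{A_n}{G_n},$$ $$\frac{A'_n}{G'_n}<\left(\frac{A'_n}{G'_n}\right)^{\frac{I(A'_n,G'_n)}{I(A_n,G_n)}\cdot\frac{A_n-G_n}{A'_n-G'_n}}<\frac{A_n}{G_n},$$ and $$\frac{A_nG_n}{A'_nG'_n}<\min\left\{\left[\frac{\frac{1}{A'_n-G'_n}\ln\frac{A'_n}{G'_n}}{\frac{1}{A_n-G_n}\ln\frac{A_n}{G_n}}\right]^2,\ \left[\frac{\frac{1}{{A'_n}^n-{G'_n}^n}\ln\frac{{A'_n}^n}{{G'_n}^n}}{\frac{1}{{A_n}^n-{G_n}^n}\ln\frac{{A_n}^n}{{G_n}^n}}\right]^{\frac2n}\right\}<1.$$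
   Context: $A_n=\frac1n\sum_{i=1}^n x_i$ and $G_n=\prod_{i=1}^n x_i^{1/n}$ are the arithmetic and geometric means of $x_1,\dots,x_n$; $A'_n=\frac1n\sum_{i=1}^n(1-x_i)$ and $G'_n=\prod_{i=1}^n(1-x_i)^{1/n}$ are the arithmetic and geometric means of $1-x_1,\dots,1-x_n$. For $u,v>0$ the identric mean is $I(u,v)=\frac{1}{e}\left(\frac{u^u}{v^v}\right)^{1/(u-v)}$ if $u\neq v$ and $I(u,u)=u$. *)

theory Defs
  imports Complex_Main
begin

definition AM :: "nat \<Rightarrow> (nat \<Rightarrow> real) \<Rightarrow> real" where
  "AM n x = (1 / real n) * (\<Sum>i<n. x i)"

definition GM :: "nat \<Rightarrow> (nat \<Rightarrow> real) \<Rightarrow> real" where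
  "GM n x = (\<Prod>i<n. x i powr (1 / real n))"

definition AM' :: "nat \<Rightarrow> (nat \<Rightarrow> real) \<Rightarrow> real" where
  "AM' n x = (1 / real n) * (\<Sum>i<n. 1 - x i)"

definition GM' :: "nat \<Rightarrow> (nat \<Rightarrow> real) \<Rightarrow> real" where
  "GM' n x = (\<Prod>i<n. (1 - x i) powr (1 / real n))"

definition identric :: "real \<Rightarrow> real \<Rightarrow> real" where
  "identric u v = (if u = v then u
     else (1 / exp 1) * ((u powr u) / (v powr v)) powr (1 / (u - v)))"

end

theory Submission
  imports Defs
begin



lemma d_E2: "0 < (s::real) \<Longrightarrow> DERIV (\<lambda>s::real. (s - 1/s)/2 - ln s) s :> ((1 + 1/s^2)/2 - 1/s)"
  by (rule derivative_eq_intros refl | simp)+ (simp add: field_simps power2_eq_square)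
lemma d_E1: "0 < (s::real) \<Longrightarrow> DERIV (\<lambda>s::real. s - 1 - (1-s)^2/2 - ln s) s :> (1 + (1 - s) - 1/s)"
  by (rule derivative_eq_intros refl | simp)+ (simp add: field_simps power2_eq_square)
lemma d_E3: "0 < (s::real) \<Longrightarrow> DERIV (\<lambda>s::real. ln s - (s - 1) + (s-1)^2/2) s :> (1/s - 1 + (s - 1))"
  by (rule derivative_eq_intros refl | simp)+ (simp add: field_simps power2_eq_square)
lemma d_E5: "0 < (s::real) \<Longrightarrow> DERIV (\<lambda>s::real. ln s - 2*(s-1)/(s+1)) s :> (1/s - 4/(s+1)^2)"
  by (rule derivative_eq_intros refl | simp)+ (simp add: field_simps power2_eq_square)

lemma E2: fixes t::real assumes "1 < t" shows "ln t < (t^2 - 1)/(2*t)"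
proof -
  let ?f = "\<lambda>s::real. (s - 1/s)/2 - ln s"
  have "?f 1 < ?f t"
  proof (rule DERIV_pos_imp_increasing_open[OF assms])
    fix s::real assume s: "1 < s" "s < t"
    have "s \<noteq> 0" using s by auto
    hence "(1 + 1/s^2)/2 - 1/s = (1 - 1/s)^2/2" by (simp add: power2_eq_square field_simps)
    also have "... > 0" using s by simp
    finally show "\<exists>y. DERIV ?f s :> y \<and> y > 0" using d_E2[of s] s by auto
  next
    show "continuous_on {1..t} ?f" by (intro continuous_intros) auto
  qed
  thus ?thesis using assms by (simp add: power2_eq_square field_simps)
qed

lemma E1: fixes t::real assumes "0 < t" "t < 1" shows "ln t < t - 1 - (1-t)^2/2"
proof -
  let ?f = "\<lambda>s::real. s - 1 - (1-s)^2/2 - ln s"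
  have "?f t > ?f 1"
  proof (rule DERIV_neg_imp_decreasing_open[OF assms(2)])
    fix s::real assume s: "t < s" "s < 1"
    have "1 + (1 - s) - 1/s = -((1-s)^2/s)" using s assms by (simp add: power2_eq_square field_simps)
    also have "... < 0" using s assms by simp
    finally show "\<exists>y. DERIV ?f s :> y \<and> y < 0" using d_E1[of s] s assms by auto
  next
    show "continuous_on {t..1} ?f" using assms by (intro continuous_intros) auto
  qed
  thus ?thesis by simp
qed

lemma E3: fixes t::real assumes "1 < t" shows "ln t > t - 1 - (t-1)^2/2"
proof -
  let ?f = "\<lambda>s::real. ln s - (s - 1) + (s-1)^2/2"
  have "?f 1 < ?f t"
  proof (rule DERIV_pos_imp_increasing_open[OF assms])
    fix s::real assume s: "1 < s" "s < t"
    have "1/s - 1 + (s - 1) = (s-1)^2/s" using s by (simp add: power2_eq_square field_simps)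
    also have "... > 0" using s by simp
    finally show "\<exists>y. DERIV ?f s :> y \<and> y > 0" using d_E3[of s] s by auto
  next
    show "continuous_on {1..t} ?f" by (intro continuous_intros) auto
  qed
  thus ?thesis by simp
qed

lemma E4: fixes t::real assumes "0 < t" "t < 1" shows "ln t > (t^2 - 1)/(2*t)"
proof -
  have "ln (1/t) < ((1/t)^2 - 1)/(2*(1/t))" using assms by (intro E2) simp
  moreover have "((1/t)^2 - 1)/(2*(1/t)) = (1 - t^2)/(2*t)" using assms by (simp add: power2_eq_square field_simps)
  moreover have "ln (1/t) = - ln t" using assms by (simp add: ln_div)
  moreover have "(1 - t^2)/(2*t) = - ((t^2 - 1)/(2*t))" by (metis minus_diff_eq minus_divide_left)
  ultimately show ?thesis by linarith
qed

lemma E5: fixes t::real assumes "1 < t" shows "ln t > 2*(t-1)/(t+1)"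
proof -
  let ?f = "\<lambda>s::real. ln s - 2*(s-1)/(s+1)"
  have "?f 1 < ?f t"
  proof (rule DERIV_pos_imp_increasing_open[OF assms])
    fix s::real assume s: "1 < s" "s < t"
    have p: "(s+1)^2 > 0" "s > 0" using s by auto
    have "1/s - 4/(s+1)^2 = ((s+1)^2 - 4*s)/(s*(s+1)^2)" using p by (simp add: field_simps)
    also have "(s+1)^2 - 4*s = (s-1)^2" by (simp add: power2_eq_square algebra_simps)
    hence "((s+1)^2 - 4*s)/(s*(s+1)^2) = (s-1)^2/(s*(s+1)^2)" by simp
    also have "... > 0" using s by simp
    finally show "\<exists>y. DERIV ?f s :> y \<and> y > 0" using d_E5[of s] s by auto
  next
    show "continuous_on {1..t} ?f" by (intro continuous_intros) auto
  qed
  thus ?thesis by simp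
qed

lemma ln_lt: fixes t::real assumes "0 < t" "t \<noteq> 1" shows "ln t < t - 1"
proof (cases "t < 1")
  case True
  have "(1-t)^2/2 \<ge> 0" by simp
  thus ?thesis using E1[of t] assms True by linarith
next
  case False
  hence t: "t > 1" using assms by auto
  have "(t - 1) * (2*t) - (t^2 - 1) = (t-1)^2" by (simp add: power2_eq_square algebra_simps)
  hence "t^2 - 1 \<le> (t - 1) * (2*t)" using zero_le_power2[of "t-1"] by linarith
  hence "(t^2 - 1)/(2*t) \<le> t - 1" using t by (simp add: divide_le_eq)
  thus ?thesis using E2[OF t] by simp
qed

lemma U1: fixes t c :: real assumes "0 < t" "t \<noteq> 1" "0 < c" "c \<le> 1/2" "2*t*c \<le> 1"
  shows "t - 1 - ln t > c*(t-1)^2"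
proof (cases "t < 1")
  case True
  have "ln t < t - 1 - (1-t)^2/2" using E1[OF assms(1) True] .
  moreover have "c*(t-1)^2 \<le> (1/2)*(t-1)^2" using assms(4) by (intro mult_right_mono) auto
  moreover have "(1/2)*(t-1)^2 = (1-t)^2/(2::real)" by (simp add: power2_commute)
  ultimately show ?thesis by linarith
next
  case False
  hence t: "t > 1" using assms by auto
  have "ln t < (t^2 - 1)/(2*t)" using E2[OF t] .
  moreover have "(t^2 - 1)/(2*t) = t - 1 - (t-1)^2/(2*t)" using t by (simp add: field_simps power2_eq_square)
  moreover have "c*(t-1)^2 \<le> (t-1)^2/(2*t)"
  proof -
    have "c \<le> 1/(2*t)" using assms t by (simp add: field_simps)
    hence "c*(t-1)^2 \<le> (1/(2*t))*(t-1)^2" by (intro mult_right_mono) auto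
    thus ?thesis by simp
  qed
  ultimately show ?thesis by linarith
qed

lemma U2: fixes t c :: real assumes "0 < t" "1/2 \<le> c" "1 \<le> 2*t*c"
  shows "t - 1 - ln t \<le> c*(t-1)^2"
proof (cases "t < 1")
  case True
  have "ln t > (t^2 - 1)/(2*t)" using E4[OF assms(1) True] .
  moreover have "(t^2 - 1)/(2*t) = t - 1 - (t-1)^2/(2*t)" using assms by (simp add: field_simps power2_eq_square)
  moreover have "c*(t-1)^2 \<ge> (t-1)^2/(2*t)"
  proof -
    have "c \<ge> 1/(2*t)" using assms by (simp add: field_simps)
    hence "(1/(2*t))*(t-1)^2 \<le> c*(t-1)^2" by (intro mult_right_mono) auto
    thus ?thesis by simp
  qed
  ultimately show ?thesis by linarith
next
  case False
  show ?thesis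
  proof (cases "t = 1")
    case False
    hence t: "t > 1" using \<open>\<not> t < 1\<close> by auto
    have "ln t > t - 1 - (t-1)^2/2" using E3[OF t] .
    moreover have "(1/2)*(t-1)^2 \<le> c*(t-1)^2" using assms(2) by (intro mult_right_mono) auto
    ultimately show ?thesis by linarith
  qed simp
qed

lemma K1: fixes x a :: real assumes "0 < x" "x \<le> 1/2" "0 < a" "a \<le> 1/2" "x \<noteq> a"
  shows "ln x < ln a + (x-a)/a - 2*(x-a)^2"
proof -
  have "4*a*x \<le> 1" using assms mult_mono[of a "1/2" x "1/2"] by simp
  moreover have "4*a*a \<le> 1" using assms mult_mono[of a "1/2" a "1/2"] by simp
  ultimately have "x/a - 1 - ln (x/a) > (2*a^2)*(x/a-1)^2"
    using assms by (intro U1) (auto simp: field_simps power2_eq_square mult_mono)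
  moreover have "ln (x/a) = ln x - ln a" using assms by (simp add: ln_div)
  moreover have "(2*a^2)*(x/a-1)^2 = 2*(x-a)^2" using assms by (simp add: field_simps power2_eq_square)
  moreover have "x/a - 1 = (x-a)/a" using assms by (simp add: field_simps)
  ultimately show ?thesis by linarith
qed

lemma K2: fixes y a :: real assumes "1/2 \<le> y" "1/2 \<le> a"
  shows "ln y \<ge> ln a + (y-a)/a - 2*(y-a)^2"
proof -
  have "4*a*y \<ge> 1" using assms mult_mono[of "1/2" a "1/2" y] by simp
  moreover have "4*a*a \<ge> 1" using assms mult_mono[of "1/2" a "1/2" a] by simp
  ultimately have "y/a - 1 - ln (y/a) \<le> (2*a^2)*(y/a-1)^2"
    using assms by (intro U2) (auto simp: field_simps power2_eq_square)
  moreover have "ln (y/a) = ln y - ln a" using assms by (simp add: ln_div)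
  moreover have "(2*a^2)*(y/a-1)^2 = 2*(y-a)^2" using assms by (simp add: field_simps power2_eq_square)
  moreover have "y/a - 1 = (y-a)/a" using assms by (simp add: field_simps)
  ultimately show ?thesis by linarith
qed

lemma L1: fixes x g :: real assumes "0 < x" "x \<le> 1/2" "0 < g" "g \<le> 1/2" "x \<noteq> g"
  shows "x - (x-g)^2 > g + g * ln (x/g)"
proof -
  have "x/g - 1 - ln (x/g) > g*(x/g-1)^2"
    using assms by (intro U1) (auto simp: field_simps)
  hence "g*(x/g - 1 - ln (x/g)) > g*(g*(x/g-1)^2)" using assms by simp
  moreover have "g*(x/g - 1 - ln (x/g)) = x - g - g*ln(x/g)" using assms by (simp add: field_simps)
  moreover have "g*(g*(x/g-1)^2) = (x-g)^2" using assms by (simp add: field_simps power2_eq_square)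
  ultimately show ?thesis by linarith
qed

lemma L2: fixes y g :: real assumes "1/2 \<le> y" "1/2 \<le> g"
  shows "y - (y-g)^2 \<le> g + g * ln (y/g)"
proof -
  have "y/g - 1 - ln (y/g) \<le> g*(y/g-1)^2"
    using assms by (intro U2) (auto simp: field_simps)
  hence "g*(y/g - 1 - ln (y/g)) \<le> g*(g*(y/g-1)^2)" using assms by simp
  moreover have "g*(y/g - 1 - ln (y/g)) = y - g - g*ln(y/g)" using assms by (simp add: field_simps)
  moreover have "g*(g*(y/g-1)^2) = (y-g)^2" using assms by (simp add: field_simps power2_eq_square)
  ultimately show ?thesis by linarith
qed



lemma d_M1: "1 < (s::real) \<Longrightarrow> DERIV (\<lambda>t. (t+1)*ln t/(t-1)) s :> ((s+1)*(s-1)/s - 2*ln s)/(s-1)^2"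
  by (rule derivative_eq_intros refl | simp)+ (simp add: field_simps power2_eq_square)
lemma d_Mk: "1 < (s::real) \<Longrightarrow> DERIV (\<lambda>u. (u - 1/u)/ln u) s :> ((1 + 1/s^2)*ln s - (1 - 1/s^2))/(ln s)^2"
  by (rule derivative_eq_intros refl | simp)+ (simp add: field_simps power2_eq_square)
lemma D1: "1 < (s::real) \<Longrightarrow> DERIV (\<lambda>t. t*ln t/(t-1)) s :> (s - 1 - ln s)/(s-1)^2"
  apply (rule derivative_eq_intros refl | simp)+
  apply (simp add: divide_simps power2_eq_square)
  apply (simp add: algebra_simps)
  done
lemma D2: "1 < (s::real) \<Longrightarrow> DERIV (\<lambda>t. ln (ln t)) s :> 1/(s*ln s)"
  by (rule derivative_eq_intros refl | simp)+
lemma D3: "1 < (s::real) \<Longrightarrow> DERIV (\<lambda>t. ln (t-1)) s :> 1/(s-1)"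
  by (rule derivative_eq_intros refl | simp)+
lemma d_M3: "1 < (s::real) \<Longrightarrow> DERIV (\<lambda>t. t*ln t/(t-1) + ln (ln t) - ln (t-1)) s :> (1/(s*ln s) - ln s/(s-1)^2)"
proof -
  assume s: "1 < s"
  have "DERIV (\<lambda>t. t*ln t/(t-1) + ln (ln t) - ln (t-1)) s :> ((s - 1 - ln s)/(s-1)^2 + 1/(s*ln s) - 1/(s-1))"
    by (intro DERIV_add DERIV_diff D1 D2 D3 s)
  moreover have "(s - 1 - ln s)/(s-1)^2 + 1/(s*ln s) - 1/(s-1) = 1/(s*ln s) - ln s/(s-1)^2"
  proof -
    have "(s - 1 - ln s)/(s-1)^2 = (s-1)/(s-1)^2 - ln s/(s-1)^2" by (simp add: diff_divide_distrib)
    also have "(s-1)/(s-1)^2 = 1/(s-1)" using s by (simp add: power2_eq_square)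
    finally show ?thesis by simp
  qed
  ultimately show ?thesis by simp
qed

lemma M1: fixes s t :: real assumes "1 < s" "s < t" shows "(s+1)*ln s/(s-1) < (t+1)*ln t/(t-1)"
proof (rule DERIV_pos_imp_increasing_open[OF assms(2)])
  fix u::real assume u: "s < u" "u < t"
  hence u1: "1 < u" using assms by simp
  have "2*ln u < (u+1)*(u-1)/u" using E2[OF u1] u1 by (simp add: field_simps power2_eq_square)
  hence "((u+1)*(u-1)/u - 2*ln u)/(u-1)^2 > 0" using u1 by simp
  thus "\<exists>y. DERIV (\<lambda>t. (t+1)*ln t/(t-1)) u :> y \<and> y > 0" using d_M1[OF u1] by blast
next
  show "continuous_on {s..t} (\<lambda>t. (t+1)*ln t/(t-1))" using assms by (intro continuous_intros) auto
qed

lemma Mk: fixes s t :: real assumes "1 < s" "s < t" shows "(s - 1/s)/ln s < (t - 1/t)/ln t"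
proof (rule DERIV_pos_imp_increasing_open[OF assms(2)])
  fix u::real assume u: "s < u" "u < t"
  hence u1: "1 < u" using assms by simp
  have a: "ln u > 2*(u-1)/(u+1)" using E5[OF u1] .
  have "(u^2-1)/(u^2+1) \<le> 2*(u-1)/(u+1)"
  proof -
    have "2*(u-1)*(u^2+1) - (u^2-1)*(u+1) = (u-1)^3" by (simp add: power2_eq_square power3_eq_cube algebra_simps)
    moreover have "(u-1)^3 \<ge> 0" using u1 by simp
    ultimately have "(u^2-1)*(u+1) \<le> 2*(u-1)*(u^2+1)" by linarith
    moreover have "u^2+1 > 0" "u + 1 > 0" using u1 by (auto simp: add_pos_nonneg)
    ultimately show ?thesis by (simp add: divide_simps)
  qed
  hence "ln u > (u^2-1)/(u^2+1)" using a by linarith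
  moreover have "u^2+1 > 0" by (metis add_pos_nonneg zero_less_one zero_le_power2 add.commute)
  ultimately have "ln u * (u^2+1) > u^2 - 1" by (simp add: pos_divide_less_eq)
  moreover have "(1 + 1/u^2)*ln u - (1 - 1/u^2) = (ln u * (u^2+1) - (u^2 - 1))/u^2" using u1 by (simp add: field_simps)
  ultimately have "(1 + 1/u^2)*ln u - (1 - 1/u^2) > 0" using u1 by simp
  hence "((1 + 1/u^2)*ln u - (1 - 1/u^2))/(ln u)^2 > 0" using u1 by simp
  thus "\<exists>y. DERIV (\<lambda>u. (u - 1/u)/ln u) u :> y \<and> y > 0" using d_Mk[OF u1] by blast
next
  show "continuous_on {s..t} (\<lambda>u. (u - 1/u)/ln u)" using assms by (intro continuous_intros) auto
qed

lemma M3: fixes s t :: real assumes "1 < s" "s < t"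
  shows "s*ln s/(s-1) + ln (ln s) - ln (s-1) < t*ln t/(t-1) + ln (ln t) - ln (t-1)"
proof (rule DERIV_pos_imp_increasing_open[OF assms(2)])
  fix u::real assume u: "s < u" "u < t"
  hence u1: "1 < u" using assms by simp
  have su: "sqrt u > 1" using u1 by simp
  have "ln (sqrt u) < ((sqrt u)^2 - 1)/(2*sqrt u)" using E2[OF su] .
  hence "ln u / 2 < (u - 1)/(2*sqrt u)" using u1 by (simp add: ln_sqrt)
  hence b: "sqrt u * ln u < u - 1" using u1 by (simp add: field_simps)
  have "0 < sqrt u * ln u" using u1 by simp
  hence "(sqrt u * ln u)^2 < (u-1)^2" using b by (intro power_strict_mono) auto
  hence c: "u * (ln u)^2 < (u-1)^2" using u1 by (simp add: power_mult_distrib)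
  have ne: "u - 1 \<noteq> 0" "ln u \<noteq> 0" "u \<noteq> 0" using u1 by auto
  have "1/(u*ln u) - ln u/(u-1)^2 = ((u-1)^2 - u*(ln u)^2)/(u*ln u*(u-1)^2)" using ne
    by (simp add: field_simps) (simp add: power2_eq_square)
  also have "... > 0" using c u1 by (intro divide_pos_pos) auto
  finally show "\<exists>y. DERIV (\<lambda>t. t*ln t/(t-1) + ln (ln t) - ln (t-1)) u :> y \<and> y > 0" using d_M3[OF u1] by blast
next
  show "continuous_on {s..t} (\<lambda>t. t*ln t/(t-1) + ln (ln t) - ln (t-1))" using assms by (intro continuous_intros) auto
qed



lemma identric_eq: fixes a g :: real assumes "0 < g" "g < a"
  shows "ln (identric a g) = ln g - 1 + (a/g)*ln (a/g)/(a/g - 1)"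
proof -
  have pos: "0 < (a powr a)/(g powr g)" using assms by simp
  have "identric a g = (1 / exp 1) * ((a powr a)/(g powr g)) powr (1/(a-g))"
    using assms by (simp add: identric_def)
  hence "ln (identric a g) = -1 + (1/(a-g)) * (a * ln a - g * ln g)"
    using assms pos by (simp add: ln_mult ln_div ln_powr)
  also have "(1/(a-g)) * (a * ln a - g * ln g) = ln g + (a/g)*ln (a/g)/(a/g - 1)"
  proof -
    have lt: "ln (a/g) = ln a - ln g" using assms by (simp add: ln_div)
    have "a - g \<noteq> 0" "g \<noteq> 0" "a/g - 1 = (a-g)/g" using assms by (auto simp: field_simps)
    thus ?thesis unfolding lt by (simp add: field_simps)
  qed
  finally show ?thesis by simp
qed

lemma identric_lt: fixes a g :: real assumes "0 < g" "g < a"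
  shows "identric a g < a"
proof -
  define t where "t = a/g"
  have t: "t > 1" using assms by (simp add: t_def)
  have "ln t < t - 1" using ln_lt[of t] t by simp
  hence "t * ln t < (ln t + 1) * (t - 1)" by (simp add: algebra_simps)
  hence "t * ln t / (t - 1) < ln t + 1" using t by (simp add: pos_divide_less_eq)
  hence "ln (identric a g) < ln g + ln t" using identric_eq[OF assms] unfolding t_def by linarith
  also have "ln g + ln t = ln a" using assms by (simp add: ln_div t_def)
  finally have "ln (identric a g) < ln a" .
  moreover have "identric a g > 0" using assms by (simp add: identric_def)
  ultimately show ?thesis using assms by simp
qed

lemma identric_gt: fixes a g :: real assumes "0 < g" "g < a"
  shows "g < identric a g"
proof -
  define t where "t = a/g"
  have t: "t > 1" using assms by (simp add: t_def)
  have "ln (1/t) < 1/t - 1" using ln_lt[of "1/t"] t by simp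
  moreover have "ln (1/t) = - ln t" using t by (simp add: ln_div)
  ultimately have "- ln t < 1/t - 1" by simp
  hence "- ln t * t < (1/t - 1) * t" using t by (simp only: mult_strict_right_mono)
  hence "t - 1 < t * ln t" using t by (simp add: algebra_simps)
  hence "1 < t * ln t / (t - 1)" using t by (simp add: pos_less_divide_eq)
  hence "ln g < ln (identric a g)" using identric_eq[OF assms] unfolding t_def by linarith
  moreover have "identric a g > 0" using assms by (simp add: identric_def)
  ultimately show ?thesis using assms by simp
qed



lemma Hmono: fixes s t :: real assumes "1 < s" "s < t"
  shows "(s-1)^2/(s*(ln s)^2) < (t-1)^2/(t*(ln t)^2)"
proof -
  have k: "(sqrt x - 1/sqrt x)/ln (sqrt x) = 2*((x-1)/(sqrt x * ln x))" if "x > 1" for x::real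
  proof -
    have "ln (sqrt x) = ln x / 2" using that by (simp add: ln_sqrt)
    moreover have "sqrt x - 1/sqrt x = (x-1)/sqrt x" using that by (simp add: field_simps)
    moreover have "ln x > 0" "sqrt x > 0" using that by auto
    ultimately show ?thesis by (simp add: field_simps)
  qed
  have "(sqrt s - 1/sqrt s)/ln (sqrt s) < (sqrt t - 1/sqrt t)/ln (sqrt t)"
    using assms by (intro Mk) auto
  hence "2*((s-1)/(sqrt s * ln s)) < 2*((t-1)/(sqrt t * ln t))"
    using assms by (simp only: k[of s] k[of t])
  hence lt: "(s-1)/(sqrt s * ln s) < (t-1)/(sqrt t * ln t)" by (simp only: mult_less_cancel_left_pos[of 2] zero_less_numeral)
  have pos: "0 \<le> (s-1)/(sqrt s * ln s)" using assms by simp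
  have "((s-1)/(sqrt s * ln s))^2 < ((t-1)/(sqrt t * ln t))^2"
    using lt pos by (intro power_strict_mono) auto
  moreover have "((x-1)/(sqrt x * ln x))^2 = (x-1)^2/(x*(ln x)^2)" if "x > 1" for x::real
    using that by (simp add: power_divide power_mult_distrib)
  ultimately show ?thesis using assms by simp
qed

lemma cross: fixes a b c d :: real assumes "0<b" "0<d" shows "a/b < c/d \<longleftrightarrow> a*d < c*b"
  using assms by (simp add: field_simps)

lemma P3: fixes a g a' g' :: real
  assumes "0<g" "g<a" "0<g'" "g'<a'" "a'/g' < a/g"
  shows "(a*g)/(a'*g') < (((1/(a'-g'))*ln(a'/g'))/((1/(a-g))*ln(a/g)))^2"
proof -
  define t where "t = a/g"
  define t' where "t' = a'/g'"
  have t: "t > 1" "t' > 1" "t' < t" using assms by (auto simp: t_def t'_def)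
  have a: "a = g*t" "a' = g'*t'" using assms by (auto simp: t_def t'_def)
  have H: "(t'-1)^2/(t'*(ln t')^2) < (t-1)^2/(t*(ln t)^2)" using Hmono t by simp
  have ln: "ln t > 0" "ln t' > 0" using t by auto
  have H': "(t'-1)^2 * (t*(ln t)^2) < (t-1)^2 * (t'*(ln t')^2)"
    using H t ln by (subst cross[symmetric]) auto
  have Q: "((1/(a'-g'))*ln(a'/g'))/((1/(a-g))*ln(a/g)) = (g*(t-1)*ln t')/(g'*(t'-1)*ln t)"
    unfolding t_def[symmetric] t'_def[symmetric] unfolding a using t ln assms
    by (simp add: field_simps)
  have Q2: "((g*(t-1)*ln t')/(g'*(t'-1)*ln t))^2 = (g^2*((t-1)^2*(ln t')^2))/(g'^2*((t'-1)^2*(ln t)^2))"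
    by (simp add: power_divide power_mult_distrib)
  have L: "(a*g)/(a'*g') = (g^2*t)/(g'^2*t')" unfolding a by (simp add: power2_eq_square algebra_simps)
  have "(g^2*g'^2) * ((t'-1)^2 * (t*(ln t)^2)) < (g^2*g'^2) * ((t-1)^2 * (t'*(ln t')^2))"
    using H' assms by (intro mult_strict_left_mono) auto
  hence "(g^2*t) * (g'^2*((t'-1)^2*(ln t)^2)) < (g^2*((t-1)^2*(ln t')^2)) * (g'^2*t')"
    by (simp add: algebra_simps)
  hence "(g^2*t)/(g'^2*t') < (g^2*((t-1)^2*(ln t')^2))/(g'^2*((t'-1)^2*(ln t)^2))"
    using t ln assms by (subst cross) auto
  thus ?thesis unfolding Q Q2 L .
qed

lemma Lbounds: fixes a g :: real assumes "0<g" "g<a"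
  shows "g < (a-g)/ln(a/g)" "(a-g)/ln(a/g) < a"
proof -
  define t where "t = a/g"
  have t: "t > 1" using assms by (simp add: t_def)
  have a: "a = g*t" using assms by (simp add: t_def)
  have l1: "ln t < t - 1" using ln_lt[of t] t by simp
  have "ln (1/t) < 1/t - 1" using ln_lt[of "1/t"] t by simp
  moreover have "ln (1/t) = - ln t" using t by (simp add: ln_div)
  ultimately have l2: "1 - 1/t < ln t" by simp
  have lp: "ln t > 0" using t by simp
  have "g * (1 + ln t) < g * t" using l1 assms by (intro mult_strict_left_mono) auto
  thus "g < (a-g)/ln(a/g)" unfolding t_def[symmetric] a using lp assms
    by (simp add: pos_less_divide_eq algebra_simps)
  have "t * (1 - 1/t) < t * ln t" by (rule mult_strict_left_mono[OF l2]) (use t in simp)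
  moreover have "t * (1 - 1/t) = t - 1" using t by (simp add: field_simps)
  ultimately have "t - 1 < t * ln t" by simp
  hence "g * (t - 1) < g * (t * ln t)" using assms by (intro mult_strict_left_mono) auto
  hence "g * t < g + g * (t * ln t)" by (simp add: algebra_simps)
  thus "(a-g)/ln(a/g) < a" unfolding t_def[symmetric] a using lp assms
    by (simp add: pos_divide_less_eq algebra_simps)
qed



lemma sq_shift: fixes f :: "nat \<Rightarrow> real"
  shows "(\<Sum>i<n. (f i - c)^2) = (\<Sum>i<n. (f i - m)^2) + 2*(m-c)*((\<Sum>i<n. f i) - n*m) + n*(m-c)^2"
proof -
  have "(\<Sum>i<n. (f i - c)^2) = (\<Sum>i<n. (f i - m)^2 + 2*(m-c)*(f i - m) + (m-c)^2)"
    by (intro sum.cong) (auto simp: power2_eq_square algebra_simps)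
  also have "... = (\<Sum>i<n. (f i - m)^2) + 2*(m-c)*(\<Sum>i<n. (f i - m)) + n*(m-c)^2"
    by (simp add: sum.distrib sum_distrib_left)
  also have "(\<Sum>i<n. (f i - m)) = (\<Sum>i<n. f i) - n*m" by (simp add: sum_subtractf)
  finally show ?thesis .
qed

lemma ln_GM: fixes x :: "nat \<Rightarrow> real" assumes "\<And>i. i < n \<Longrightarrow> 0 < x i"
  shows "ln (\<Prod>i<n. x i powr (1 / real n)) = (\<Sum>i<n. ln (x i)) / n"
proof -
  have "ln (\<Prod>i<n. x i powr (1 / real n)) = (\<Sum>i<n. ln (x i powr (1 / real n)))"
    using assms by (subst ln_prod) (auto, metis less_irrefl)
  also have "... = (\<Sum>i<n. ln (x i) / n)" by (intro sum.cong) auto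
  finally show ?thesis by (simp add: sum_divide_distrib)
qed

lemma GM_pos: fixes x :: "nat \<Rightarrow> real" assumes "\<And>i. i < n \<Longrightarrow> 0 < x i"
  shows "0 < (\<Prod>i<n. x i powr (1 / real n))"
  using assms by (intro prod_pos) (auto, metis less_irrefl)


lemma div_lt: "0<(c::real) \<Longrightarrow> s < c*a - b \<Longrightarrow> s/c < a - b/c" by (simp add: field_simps)
lemma div_le: "0<(c::real) \<Longrightarrow> c*a - b \<le> s \<Longrightarrow> a - b/c \<le> s/c"
  using divide_right_mono[of "c*a-b" s c] by (simp add: diff_divide_distrib)
lemma div_lt0: "0<(c::real) \<Longrightarrow> s < c*a \<Longrightarrow> s/c < a" by (simp add: field_simps)
lemma div_le0: "0<(c::real) \<Longrightarrow> c*a \<le> s \<Longrightarrow> a \<le> s/c" by (simp add: field_simps)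



theorem theorem4p3:
  fixes n :: nat and x :: "nat \<Rightarrow> real"
  assumes "n \<ge> 1"
    and "\<forall>i<n. 0 < x i \<and> x i \<le> 1/2"
    and "\<exists>i<n. \<exists>j<n. x i \<noteq> x j"
  defines "A \<equiv> AM n x" and "G \<equiv> GM n x" and "A' \<equiv> AM' n x" and "G' \<equiv> GM' n x"
  shows
    "(A' / G' < (A / G) powr (((A + G) / (A' + G')) * ((A' - G') / (A - G)))
     \<and> (A / G) powr (((A + G) / (A' + G')) * ((A' - G') / (A - G)))
         < min ((A / G) powr ((A + G) / (A' + G'))) ((A / G) powr ((A' - G') / (A - G)))
     \<and> min ((A / G) powr ((A + G) / (A' + G'))) ((A / G) powr ((A' - G') / (A - G))) < A / G)
     \<and> (A' / G' < (A' / G') powr ((identric A' G' / identric A G) * ((A - G) / (A' - G')))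
     \<and> (A' / G') powr ((identric A' G' / identric A G) * ((A - G) / (A' - G'))) < A / G)
     \<and> ((A * G) / (A' * G') <
       min ((((1 / (A' - G')) * ln (A' / G')) / ((1 / (A - G)) * ln (A / G)))\<^sup>2)
           ((((1 / (A' ^ n - G' ^ n)) * ln (A' ^ n / G' ^ n))
              / ((1 / (A ^ n - G ^ n)) * ln (A ^ n / G ^ n))) powr (2 / real n))
     \<and> min ((((1 / (A' - G')) * ln (A' / G')) / ((1 / (A - G)) * ln (A / G)))\<^sup>2)
           ((((1 / (A' ^ n - G' ^ n)) * ln (A' ^ n / G' ^ n))
              / ((1 / (A ^ n - G ^ n)) * ln (A ^ n / G ^ n))) powr (2 / real n)) < 1)"
proof -
  have n0: "n > 0" and nr: "real n > 0" using assms(1) by auto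
  have xpos: "\<And>i. i < n \<Longrightarrow> 0 < x i" and xle: "\<And>i. i < n \<Longrightarrow> x i \<le> 1/2"
    using assms(2) by auto
  have ypos: "\<And>i. i < n \<Longrightarrow> 0 < 1 - x i"
  proof - fix i assume "i < n" hence "x i \<le> 1/2" by (rule xle) thus "0 < 1 - x i" by linarith qed
  have yge: "\<And>i. i < n \<Longrightarrow> 1/2 \<le> 1 - x i"
  proof - fix i assume "i < n" hence "x i \<le> 1/2" by (rule xle) thus "1/2 \<le> 1 - x i" by linarith qed
  obtain i0 j0 where ij: "i0 < n" "j0 < n" "x i0 \<noteq> x j0" using assms(3) by auto
  have notall: "\<exists>i<n. x i \<noteq> c" for c using ij by metis
  have sx: "(\<Sum>i<n. x i) = n * A" using n0 by (simp add: A_def AM_def)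
  have sy: "(\<Sum>i<n. 1 - x i) = n * A'" using n0 by (simp add: A'_def AM'_def)
  have sy': "real n - (\<Sum>i<n. x i) = n * A'" using sy by (simp add: sum_subtractf)
  have "real n * (A + A') = real n * 1" using sx sy by (simp add: sum_subtractf algebra_simps)
  hence "A + A' = 1" using nr by (subst (asm) mult_left_cancel) auto
  hence A'eq: "A' = 1 - A" by simp
  have lnG: "ln G = (\<Sum>i<n. ln (x i)) / n" unfolding G_def GM_def using xpos by (rule ln_GM)
  have lnG': "ln G' = (\<Sum>i<n. ln (1 - x i)) / n" unfolding G'_def GM'_def using ypos by (rule ln_GM)
  have Gpos: "G > 0" unfolding G_def GM_def using xpos by (rule GM_pos)
  have G'pos: "G' > 0" unfolding G'_def GM'_def using ypos by (rule GM_pos)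
  have Apos: "A > 0"
  proof -
    have "(\<Sum>i<n. x i) > 0" using xpos n0 by (intro sum_pos) auto
    thus ?thesis using sx nr by (simp add: zero_less_mult_iff)
  qed
  have Ale: "A \<le> 1/2"
  proof -
    have "(\<Sum>i<n. x i) \<le> (\<Sum>i<n. 1/2)" using xle by (intro sum_mono) auto
    thus ?thesis using sx nr by simp
  qed
  define S where "S = (\<Sum>i<n. (x i - A)^2)"
  have "(\<Sum>i<n. ln (x i)) < (\<Sum>i<n. ln A + (x i - A)/A - 2*(x i - A)^2)"
  proof (rule sum_strict_mono_ex1)
    show "\<forall>i\<in>{..<n}. ln (x i) \<le> ln A + (x i - A)/A - 2*(x i - A)^2"
    proof
      fix i assume "i \<in> {..<n}" hence i: "i < n" by simp
      show "ln (x i) \<le> ln A + (x i - A)/A - 2*(x i - A)^2"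
      proof (cases "x i = A")
        case False thus ?thesis using K1[OF xpos[OF i] xle[OF i] Apos Ale False] by simp
      qed (use Apos in simp)
    qed
    obtain i where i: "i < n" "x i \<noteq> A" using notall by blast
    thus "\<exists>i\<in>{..<n}. ln (x i) < ln A + (x i - A)/A - 2*(x i - A)^2"
      using K1[OF xpos[OF i(1)] xle[OF i(1)] Apos Ale i(2)] by auto
  qed simp
  also have "... = n * ln A - 2*S"
    by (simp add: sum.distrib sum_subtractf sum_divide_distrib[symmetric] sum_distrib_left[symmetric] sx S_def)
  finally have F1: "ln G < ln A - 2*S/n" unfolding lnG using nr by (intro div_lt) auto
  have A'ge: "1/2 \<le> A'" using A'eq Ale by simp
  have "(\<Sum>i<n. ln A' + ((1 - x i) - A')/A' - 2*((1 - x i) - A')^2) \<le> (\<Sum>i<n. ln (1 - x i))"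
    using K2 yge A'ge by (intro sum_mono) auto
  moreover have "(\<Sum>i<n. ln A' + ((1 - x i) - A')/A' - 2*((1 - x i) - A')^2) = n * ln A' - 2*S"
  proof -
    have "((1 - x i) - A')^2 = (x i - A)^2" for i unfolding A'eq by (simp add: power2_commute)
    thus ?thesis
      by (simp add: sum.distrib sum_subtractf sum_divide_distrib[symmetric] sum_distrib_left[symmetric] sy sy' S_def)
  qed
  ultimately have F2: "ln A' - 2*S/n \<le> ln G'" unfolding lnG' using nr by (intro div_le) auto
  have "(\<Sum>i<n. ln (1 - x i)) < (\<Sum>i<n. ln A' + ((1 - x i)/A' - 1))"
  proof (rule sum_strict_mono_ex1)
    have A'p: "A' > 0" using A'ge by simp
    have key: "ln (1 - x i) \<le> ln A' + ((1 - x i)/A' - 1)" "1 - x i \<noteq> A' \<Longrightarrow> ln (1 - x i) < ln A' + ((1 - x i)/A' - 1)"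
      if "i < n" for i
    proof -
      have eq: "ln ((1 - x i)/A') = ln (1 - x i) - ln A'" using ypos[OF that] A'p by (simp add: ln_div)
      show "ln (1 - x i) \<le> ln A' + ((1 - x i)/A' - 1)"
        using ln_le_minus_one[of "(1 - x i)/A'"] eq ypos[OF that] A'p by simp
      show "ln (1 - x i) < ln A' + ((1 - x i)/A' - 1)" if "1 - x i \<noteq> A'"
        using ln_lt[of "(1 - x i)/A'"] eq ypos[OF \<open>i<n\<close>] A'p that by simp
    qed
    show "\<forall>i\<in>{..<n}. ln (1 - x i) \<le> ln A' + ((1 - x i)/A' - 1)" using key by auto
    obtain i where "i < n" "x i \<noteq> 1 - A'" using notall by blast
    thus "\<exists>i\<in>{..<n}. ln (1 - x i) < ln A' + ((1 - x i)/A' - 1)" using key by force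
  qed simp
  also have "... = n * ln A'" using A'ge
    by (simp add: sum.distrib sum_subtractf sum_divide_distrib[symmetric] sy sy')
  finally have "ln G' < ln A'" unfolding lnG' using nr by (intro div_lt0) auto
  hence G'A': "G' < A'" using G'pos A'ge by simp
  have "ln (1/2) \<le> ln (1 - x i)" if "i < n" for i
    using yge[OF that] ypos[OF that] by (subst ln_le_cancel_iff) auto
  hence "(\<Sum>i<n. ln (1/2)) \<le> (\<Sum>i<n. ln (1 - x i))" by (intro sum_mono) auto
  hence "ln (1/2) \<le> ln G'" unfolding lnG' using nr by (intro div_le0) auto
  hence G'ge: "1/2 \<le> G'" using G'pos by simp
  have S0: "S \<ge> 0" unfolding S_def by (intro sum_nonneg) auto
  have "2*S/n \<ge> 0" using S0 nr by simp
  hence "ln G < ln A" using F1 by linarith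
  hence GA: "G < A" using Gpos Apos by simp
  have r1r: "ln (A'/G') < ln (A/G)" using F1 F2 Gpos G'pos Apos A'ge by (simp add: ln_div)
  have r1: "1 < A'/G'" using G'A' G'pos by simp
  have rr1: "A'/G' < A/G" using r1r r1 Gpos Apos by simp
  have Gle: "G \<le> 1/2" using GA Ale by simp
  have "(\<Sum>i<n. G + G * ln (x i / G)) < (\<Sum>i<n. x i - (x i - G)^2)"
  proof (rule sum_strict_mono_ex1)
    show "\<forall>i\<in>{..<n}. G + G * ln (x i / G) \<le> x i - (x i - G)^2"
    proof
      fix i assume "i \<in> {..<n}" hence i: "i < n" by simp
      show "G + G * ln (x i / G) \<le> x i - (x i - G)^2"
      proof (cases "x i = G")
        case False thus ?thesis using L1[OF xpos[OF i] xle[OF i] Gpos Gle False] by simp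
      qed (use Gpos in simp)
    qed
    obtain i where i: "i < n" "x i \<noteq> G" using notall by blast
    thus "\<exists>i\<in>{..<n}. G + G * ln (x i / G) < x i - (x i - G)^2"
      using L1[OF xpos[OF i(1)] xle[OF i(1)] Gpos Gle i(2)] by auto
  qed simp
  moreover have "(\<Sum>i<n. G + G * ln (x i / G)) = n * G"
  proof -
    have "(\<Sum>i<n. G + G * ln (x i / G)) = (\<Sum>i<n. G + G * (ln (x i) - ln G))"
    proof (intro sum.cong refl)
      fix i assume "i \<in> {..<n}"
      hence "0 < x i" using xpos by simp
      thus "G + G * ln (x i / G) = G + G * (ln (x i) - ln G)" using Gpos by (simp add: ln_div)
    qed
    also have "... = n*G + G * ((\<Sum>i<n. ln (x i)) - n * ln G)"
      by (simp add: sum.distrib sum_distrib_left[symmetric] sum_subtractf)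
    finally have "(\<Sum>i<n. G + G * ln (x i / G)) = n*G + G * ((\<Sum>i<n. ln (x i)) - n * ln G)" .
    thus ?thesis using lnG nr by simp
  qed
  moreover have "(\<Sum>i<n. x i - (x i - G)^2) = n*A - (S + n*(A-G)^2)"
    using sq_shift[of x G n A] sx by (simp add: sum_subtractf S_def)
  ultimately have D1: "S/n < (A-G) - (A-G)^2" using nr by (simp add: field_simps)
  have "(\<Sum>i<n. (1 - x i) - ((1 - x i) - G')^2) \<le> (\<Sum>i<n. G' + G' * ln ((1 - x i) / G'))"
    using L2 yge G'ge by (intro sum_mono) auto
  moreover have "(\<Sum>i<n. G' + G' * ln ((1 - x i) / G')) = n * G'"
  proof -
    have "(\<Sum>i<n. G' + G' * ln ((1 - x i) / G')) = (\<Sum>i<n. G' + G' * (ln (1 - x i) - ln G'))"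
    proof (intro sum.cong refl)
      fix i assume "i \<in> {..<n}"
      hence "0 < (1 - x i)" using ypos by simp
      thus "G' + G' * ln ((1 - x i) / G') = G' + G' * (ln (1 - x i) - ln G')" using G'pos by (simp add: ln_div)
    qed
    also have "... = n*G' + G' * ((\<Sum>i<n. ln (1 - x i)) - n * ln G')"
      by (simp add: sum.distrib sum_distrib_left[symmetric] sum_subtractf)
    finally have "(\<Sum>i<n. G' + G' * ln ((1 - x i) / G')) = n*G' + G' * ((\<Sum>i<n. ln (1 - x i)) - n * ln G')" .
    thus ?thesis using lnG' nr by simp
  qed
  moreover have "(\<Sum>i<n. (1 - x i) - ((1 - x i) - G')^2) = n*A' - (S + n*(A'-G')^2)"
  proof -
    have "(\<Sum>i<n. ((1 - x i) - G')^2) = (\<Sum>i<n. ((1 - x i) - A')^2) + n*(A'-G')^2"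
      using sq_shift[of "\<lambda>i. 1 - x i" G' n A'] sy by simp
    moreover have "((1 - x i) - A')^2 = (x i - A)^2" for i unfolding A'eq by (simp add: power2_commute)
    ultimately show ?thesis using sy by (simp add: sum_subtractf S_def)
  qed
  ultimately have D2: "(A'-G') - (A'-G')^2 \<le> S/n" using nr by (simp add: field_simps)
  have D: "A' - G' < A - G"
  proof (rule ccontr)
    assume "\<not> ?thesis"
    hence h: "A - G \<le> A' - G'" by simp
    have "A' - G' \<le> 1/2" using A'eq Apos G'ge by simp
    have e: "(A'-G') - (A'-G')^2 - ((A-G) - (A-G)^2) = ((A'-G') - (A-G))*(1 - (A-G) - (A'-G'))"
      by (simp add: power2_eq_square algebra_simps)
    have "1 - (A-G) - (A'-G') \<ge> 0" using \<open>A' - G' \<le> 1/2\<close> h by linarith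
    hence "((A'-G') - (A-G))*(1 - (A-G) - (A'-G')) \<ge> 0" using h by simp
    hence "(A-G) - (A-G)^2 \<le> (A'-G') - (A'-G')^2" using e by linarith
    thus False using D1 D2 by simp
  qed
  define r where "r = A/G"
  define r1 where "r1 = A'/G'"
  have r1g: "1 < r1" and r1r: "r1 < r" using r1 rr1 by (auto simp: r_def r1_def)
  have rg: "1 < r" using r1g r1r by simp
  have AG0: "A - G > 0" and AG0': "A' - G' > 0" using GA G'A' by auto
  have Gp: "G > 0" using Gpos .
  define e1 where "e1 = (A + G) / (A' + G')"
  define e2 where "e2 = (A' - G') / (A - G)"
  have e1p: "0 < e1" and e1l: "e1 < 1" using Apos Gpos A'ge G'ge GA Ale by (auto simp: e1_def)
  have e2p: "0 < e2" and e2l: "e2 < 1" using AG0 AG0' D by (auto simp: e2_def)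
  have P1a: "ln r1 < e1 * e2 * ln r"
  proof -
    have m: "(r1+1)*ln r1/(r1-1) < (r+1)*ln r/(r-1)" using M1[OF r1g r1r] .
    have "(r1+1)*ln r1/(r1-1) = (A'+G')/(A'-G') * ln r1" unfolding r1_def using G'pos AG0'
      by (simp add: field_simps)
    moreover have "(r+1)*ln r/(r-1) = (A+G)/(A-G) * ln r" unfolding r_def using Gpos AG0
      by (simp add: field_simps)
    ultimately have m': "(A'+G')/(A'-G') * ln r1 < (A+G)/(A-G) * ln r" using m by simp
    have c: "(A'-G')/(A'+G') > 0" using AG0' G'pos A'ge by simp
    have "(A'-G')/(A'+G') * ((A'+G')/(A'-G') * ln r1) < (A'-G')/(A'+G') * ((A+G)/(A-G) * ln r)"
      using mult_strict_left_mono[OF m' c] .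
    moreover have "(A'-G')/(A'+G') * ((A'+G')/(A'-G') * ln r1) = ln r1" using AG0' G'pos A'ge by simp
    moreover have "(A'-G')/(A'+G') * ((A+G)/(A-G) * ln r) = e1 * e2 * ln r" by (simp add: e1_def e2_def)
    ultimately show ?thesis by simp
  qed
  have P1: "r1 < r powr (e1 * e2)"
  proof -
    have "ln r1 < ln (r powr (e1*e2))" using P1a rg by simp
    thus ?thesis using r1g rg by (subst (asm) ln_less_cancel_iff) auto
  qed
  have P2: "r powr (e1 * e2) < min (r powr e1) (r powr e2)"
    using rg e1p e1l e2p e2l by (simp add: mult_less_cancel_left_pos mult_less_cancel_right_pos
        mult_strict_left_mono[of e2 1 e1, simplified] mult_strict_right_mono[of e1 1 e2, simplified])
  have P3': "min (r powr e1) (r powr e2) < r"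
  proof -
    have "r powr e1 < r powr 1" by (rule powr_less_mono[OF e1l rg])
    hence "r powr e1 < r" using rg by simp
    thus ?thesis by simp
  qed
  define I where "I = identric A G"
  define I' where "I' = identric A' G'"
  have IA: "I < A" unfolding I_def using identric_lt[OF Gpos GA] .
  have IG: "G < I" unfolding I_def using identric_gt[OF Gpos GA] .
  have I'G': "G' < I'" unfolding I'_def using identric_gt[OF G'pos G'A'] .
  have Ip: "I > 0" using IG Gpos by simp
  have II': "I < I'" using IA Ale G'ge I'G' by simp
  define E where "E = (I'/I) * ((A-G)/(A'-G'))"
  have E1: "1 < E"
  proof -
    have "1 < I'/I" using II' Ip by simp
    moreover have "1 < (A-G)/(A'-G')" using D AG0' by simp
    ultimately show ?thesis unfolding E_def by (rule less_1_mult)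
  qed
  have Q1: "r1 < r1 powr E"
  proof -
    have "r1 powr 1 < r1 powr E" by (rule powr_less_mono[OF E1 r1g])
    thus ?thesis using r1g by simp
  qed
  have Q2: "r1 powr E < r"
  proof -
    have lI: "ln I = ln G - 1 + r*ln r/(r-1)" unfolding I_def r_def using identric_eq[OF Gpos GA] .
    have lI': "ln I' = ln G' - 1 + r1*ln r1/(r1-1)" unfolding I'_def r1_def using identric_eq[OF G'pos G'A'] .
    have lAG: "ln (A - G) = ln G + ln (r - 1)"
    proof -
      have "A - G = G * (r - 1)" unfolding r_def using Gpos by (simp add: field_simps)
      thus ?thesis using Gpos rg by (simp add: ln_mult)
    qed
    have lAG': "ln (A' - G') = ln G' + ln (r1 - 1)"
    proof -
      have "A' - G' = G' * (r1 - 1)" unfolding r1_def using G'pos by (simp add: field_simps)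
      thus ?thesis using G'pos r1g by (simp add: ln_mult)
    qed
    have lnr: "ln r > 0" "ln r1 > 0" using rg r1g by auto
    have "ln (E * ln r1) = ln I' - ln I + ln (A - G) - ln (A' - G') + ln (ln r1)"
      unfolding E_def using Ip II' AG0 AG0' lnr by (simp add: ln_mult ln_div)
    also have "... < ln (ln r)" using M3[OF r1g r1r] lI lI' lAG lAG' by linarith
    finally have "E * ln r1 < ln r" using lnr E1 by (subst (asm) ln_less_cancel_iff) auto
    hence "ln (r1 powr E) < ln r" using r1g by simp
    thus ?thesis using r1g rg by (subst (asm) ln_less_cancel_iff) auto
  qed
  define Q where "Q = ((1 / (A' - G')) * ln (A' / G')) / ((1 / (A - G)) * ln (A / G))"
  define Qn where "Qn = ((1 / (A' ^ n - G' ^ n)) * ln (A' ^ n / G' ^ n)) / ((1 / (A ^ n - G ^ n)) * ln (A ^ n / G ^ n))"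
  have R1: "(A*G)/(A'*G') < Q^2" unfolding Q_def using P3[OF Gpos GA G'pos G'A' rr1] .
  have Qlt: "Q < 1" and Qpos: "Q > 0"
  proof -
    have L1b: "(A-G)/ln(A/G) < A" using Lbounds(2)[OF Gpos GA] .
    have L2b: "G' < (A'-G')/ln(A'/G')" using Lbounds(1)[OF G'pos G'A'] .
    have lp: "ln (A/G) > 0" "ln (A'/G') > 0" using rg r1g by (auto simp: r_def r1_def)
    have qe: "Q = ((A-G)/ln(A/G)) / ((A'-G')/ln(A'/G'))" unfolding Q_def using lp AG0 AG0' by (simp add: field_simps)
    define La where "La = (A-G)/ln(A/G)"
    define Lb where "Lb = (A'-G')/ln(A'/G')"
    have "La < Lb" using L1b L2b Ale G'ge unfolding La_def Lb_def by simp
    moreover have "La > 0" using lp AG0 unfolding La_def by simp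
    moreover have "Q = La / Lb" using qe unfolding La_def Lb_def .
    ultimately show "Q < 1" "Q > 0" by (simp_all add: divide_less_eq_1)
  qed
  have Q2lt: "Q^2 < 1" using Qlt Qpos by (simp add: power_less_one_iff abs_square_less_1)
  have An: "0 < G^n" "G^n < A^n" "0 < G'^n" "G'^n < A'^n" "A'^n/G'^n < A^n/G^n"
    using Gpos GA G'pos G'A' rr1 r1g n0 by (auto simp: power_strict_mono power_divide[symmetric])
  have Rn: "(A^n*G^n)/(A'^n*G'^n) < Qn^2" unfolding Qn_def using P3[OF An] .
  have Qnpos: "Qn > 0"
  proof -
    have "ln (A^n/G^n) > 0" "ln (A'^n/G'^n) > 0" using An by auto
    thus ?thesis unfolding Qn_def using An by simp
  qed
  define c where "c = (A*G)/(A'*G')"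
  have cpos: "c > 0" using Apos Gpos G'pos A'ge by (simp add: c_def)
  have cn: "(A^n*G^n)/(A'^n*G'^n) = c^n" by (simp add: c_def power_divide power_mult_distrib)
  have R2: "c < Qn powr (2 / real n)"
  proof -
    have "c^n < Qn^2" using Rn cn by simp
    hence "(c^n) powr (1/n) < (Qn^2) powr (1/n)" using cpos nr by (intro powr_less_mono2) auto
    moreover have "(c^n) powr (1/n) = c"
    proof -
      have "c^n = c powr (real n)" using powr_realpow[OF cpos, of n] by simp
      hence "(c^n) powr (1/n) = c powr (real n * (1/n))" by (simp only: powr_powr)
      thus ?thesis using nr cpos by simp
    qed
    moreover have "(Qn^2) powr (1/n) = Qn powr (2/n)"
    proof -
      have "Qn^2 = Qn powr (real 2)" using powr_realpow[OF Qnpos, of 2] by simp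
      hence "(Qn^2) powr (1/n) = Qn powr (real 2 * (1/n))" by (simp only: powr_powr)
      thus ?thesis by simp
    qed
    ultimately show ?thesis by simp
  qed
  have Rm: "c < min (Q^2) (Qn powr (2 / real n))" using R1 R2 unfolding c_def[symmetric] by simp
  have Rl: "min (Q^2) (Qn powr (2 / real n)) < 1" using Q2lt by (rule min.strict_coboundedI1)
  note facts = P1 P2 P3' Q1 Q2 Rm Rl
  note facts' = facts[unfolded Q_def Qn_def c_def I_def I'_def E_def e1_def e2_def r_def r1_def]
  show ?thesis by (intro conjI facts')
qed

end
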